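(* Let $I$ be a compact segment and let $G\subset \mathrm{Diff}^1_+(I)$ be a group. The following two properties are equivalent: (i) there is a path $(h_t)_{t\in[0,1)}$ of diffeomorphisms $h_t\in \mathrm{Diff}^1_+(I)$, continuous for the $C^1$-topology, such that for every $g\in G$, $h_t g h_t^{-1}$ tends to the identity in the $C^1$-topology as $t\to 1$; (ii) there is a sequence $(h_n)_{n\in\mathbb N}$ of diffeomorphisms $h_n\in \mathrm{Diff}^1_+(I)$ such that for every $g\in G$, $h_n g h_n^{-1}$ tends to the identity in the $C^1$-topology as $n\to+\infty$.
   Context: $\mathrm{Diff}^1_+(I)$ denotes the group of orientation preserving $C^1$-diffeomorphisms of the segment $I$, endowed with the $C^1$-topology. *)

theory Defs
  imports "HOL-Analysis.Analysis"
begin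

text \<open>Diffeomorphisms of the compact segment I = {a..b} (a < b) are represented by
  functions real => real; only their values on {a..b} matter.\<close>

definition dI :: "real \<Rightarrow> real \<Rightarrow> (real \<Rightarrow> real) \<Rightarrow> real \<Rightarrow> real" where
  "dI a b f x = (SOME d. (f has_real_derivative d) (at x within {a..b}))"

definition Diff1p :: "real \<Rightarrow> real \<Rightarrow> (real \<Rightarrow> real) set" where
  "Diff1p a b = {f. bij_betw f {a..b} {a..b} \<and> strict_mono_on {a..b} f
      \<and> (\<forall>x\<in>{a..b}. f differentiable (at x within {a..b}))
      \<and> continuous_on {a..b} (dI a b f)
      \<and> bij_betw (inv_into {a..b} f) {a..b} {a..b}
      \<and> (\<forall>x\<in>{a..b}. inv_into {a..b} f differentiable (at x within {a..b}))
      \<and> continuous_on {a..b} (dI a b (inv_into {a..b} f))}"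

definition c1dist :: "real \<Rightarrow> real \<Rightarrow> (real \<Rightarrow> real) \<Rightarrow> (real \<Rightarrow> real) \<Rightarrow> real" where
  "c1dist a b f g = (SUP x\<in>{a..b}. \<bar>f x - g x\<bar>) + (SUP x\<in>{a..b}. \<bar>dI a b f x - dI a b g x\<bar>)"

definition is_subgroup_Diff1p :: "real \<Rightarrow> real \<Rightarrow> (real \<Rightarrow> real) set \<Rightarrow> bool" where
  "is_subgroup_Diff1p a b G \<longleftrightarrow> G \<subseteq> Diff1p a b
     \<and> (\<exists>e\<in>G. \<forall>x\<in>{a..b}. e x = x)
     \<and> (\<forall>g\<in>G. \<forall>h\<in>G. \<exists>k\<in>G. \<forall>x\<in>{a..b}. k x = g (h x))
     \<and> (\<forall>g\<in>G. \<exists>k\<in>G. \<forall>x\<in>{a..b}. k x = inv_into {a..b} g x)"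

definition conjI :: "real \<Rightarrow> real \<Rightarrow> (real \<Rightarrow> real) \<Rightarrow> (real \<Rightarrow> real) \<Rightarrow> real \<Rightarrow> real" where
  "conjI a b h g = h \<circ> g \<circ> inv_into {a..b} h"

end

theory Submission
  imports Defs
begin

lemma dI_eq:
  assumes "a < b" "x \<in> {a..b}" "(f has_real_derivative D) (at x within {a..b})"
  shows "dI a b f x = D"
proof -
  have nb: "at x within {a..b} \<noteq> bot" using assms by (simp add: trivial_limit_within)
  show ?thesis unfolding dI_def
    by (rule some_equality) (use assms nb has_field_derivative_unique in blast)+
qed

lemma dI_deriv:
  assumes "f differentiable (at x within {a..b})"
  shows "(f has_real_derivative dI a b f x) (at x within {a..b})"
  using assms unfolding dI_def real_differentiable_def by (rule someI_ex)

lemma dI_id: "a < b \<Longrightarrow> x \<in> {a..b} \<Longrightarrow> dI a b id x = 1"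
  by (rule dI_eq) (auto simp: id_def intro: DERIV_ident)

lemma deriv_nonneg:
  assumes "a < b" "x \<in> {a..b}" "strict_mono_on {a..b} f"
    "(f has_real_derivative D) (at x within {a..b})"
  shows "0 \<le> D"
proof -
  have nb: "at x within {a..b} \<noteq> bot" using assms by (simp add: trivial_limit_within)
  have t: "((\<lambda>y. (f y - f x) / (y - x)) \<longlongrightarrow> D) (at x within {a..b})"
    using assms(4) by (simp add: has_field_derivative_iff)
  have "eventually (\<lambda>y. y \<in> {a..b} \<and> y \<noteq> x) (at x within {a..b})"
    by (simp add: eventually_at_filter)
  then have "eventually (\<lambda>y. 0 \<le> (f y - f x) / (y - x)) (at x within {a..b})"
  proof (rule eventually_mono)
    fix y assume y: "y \<in> {a..b} \<and> y \<noteq> x"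
    show "0 \<le> (f y - f x) / (y - x)"
    proof (cases "y < x")
      case True
      then have "f y < f x" using assms(3) y assms(2) by (auto simp: strict_mono_on_def)
      then show ?thesis using True by (simp add: divide_nonpos_neg less_imp_le)
    next
      case False
      then have "x < y" using y by auto
      then have "f x < f y" using assms(3) y assms(2) by (auto simp: strict_mono_on_def)
      then show ?thesis using \<open>x < y\<close> by simp
    qed
  qed
  then show ?thesis using tendsto_lowerbound[OF t _ nb] by blast
qed

lemma Diff1p_basic:
  assumes "h \<in> Diff1p a b"
  shows "bij_betw h {a..b} {a..b}" "strict_mono_on {a..b} h"
    "\<And>x. x \<in> {a..b} \<Longrightarrow> h differentiable (at x within {a..b})"
    "continuous_on {a..b} (dI a b h)"
    "bij_betw (inv_into {a..b} h) {a..b} {a..b}"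
    "\<And>x. x \<in> {a..b} \<Longrightarrow> inv_into {a..b} h differentiable (at x within {a..b})"
    "continuous_on {a..b} (dI a b (inv_into {a..b} h))"
    "h ` {a..b} = {a..b}" "inj_on h {a..b}"
    "\<And>x. x \<in> {a..b} \<Longrightarrow> h x \<in> {a..b}"
    "\<And>x. x \<in> {a..b} \<Longrightarrow> inv_into {a..b} h (h x) = x"
    "\<And>x. x \<in> {a..b} \<Longrightarrow> h (inv_into {a..b} h x) = x"
    "\<And>x. x \<in> {a..b} \<Longrightarrow> inv_into {a..b} h x \<in> {a..b}"
    "continuous_on {a..b} h"
proof -
  have D: "bij_betw h {a..b} {a..b}" "strict_mono_on {a..b} h"
    "\<And>x. x \<in> {a..b} \<Longrightarrow> h differentiable (at x within {a..b})"
    "continuous_on {a..b} (dI a b h)"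
    "bij_betw (inv_into {a..b} h) {a..b} {a..b}"
    "\<And>x. x \<in> {a..b} \<Longrightarrow> inv_into {a..b} h differentiable (at x within {a..b})"
    "continuous_on {a..b} (dI a b (inv_into {a..b} h))"
    using assms unfolding Diff1p_def by blast+
  then show "bij_betw h {a..b} {a..b}" "strict_mono_on {a..b} h"
    "\<And>x. x \<in> {a..b} \<Longrightarrow> h differentiable (at x within {a..b})"
    "continuous_on {a..b} (dI a b h)"
    "bij_betw (inv_into {a..b} h) {a..b} {a..b}"
    "\<And>x. x \<in> {a..b} \<Longrightarrow> inv_into {a..b} h differentiable (at x within {a..b})"
    "continuous_on {a..b} (dI a b (inv_into {a..b} h))" by blast+
  have im: "h ` {a..b} = {a..b}" and inj: "inj_on h {a..b}" using D(1) by (simp_all add: bij_betw_def)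
  then show "h ` {a..b} = {a..b}" "inj_on h {a..b}" by blast+
  show "\<And>x. x \<in> {a..b} \<Longrightarrow> h x \<in> {a..b}" using im by blast
  show "\<And>x. x \<in> {a..b} \<Longrightarrow> inv_into {a..b} h (h x) = x" using inj by (rule inv_into_f_f)
  show "\<And>x. x \<in> {a..b} \<Longrightarrow> h (inv_into {a..b} h x) = x"
    using im by (metis f_inv_into_f)
  show "\<And>x. x \<in> {a..b} \<Longrightarrow> inv_into {a..b} h x \<in> {a..b}"
    using im by (metis inv_into_into)
  show "continuous_on {a..b} h"
    using D(3) by (metis continuous_on_eq_continuous_within differentiable_imp_continuous_within)
qed

lemma Diff1p_pos:
  assumes "a < b" "h \<in> Diff1p a b" "x \<in> {a..b}"
  shows "0 < dI a b h x" "dI a b (inv_into {a..b} h) (h x) = 1 / dI a b h x"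
proof -
  note B = Diff1p_basic[OF assms(2)]
  define g where "g = inv_into {a..b} h"
  have hx: "h x \<in> {a..b}" using B assms by auto
  have Dg: "(g has_real_derivative dI a b g (h x)) (at (h x) within h ` {a..b})"
    unfolding B(8) g_def using B(6)[OF hx] by (rule dI_deriv)
  have Dh: "(h has_real_derivative dI a b h x) (at x within {a..b})"
    using B(3)[OF assms(3)] by (rule dI_deriv)
  have "(g \<circ> h has_real_derivative dI a b g (h x) * dI a b h x) (at x within {a..b})"
    by (rule DERIV_image_chain[OF Dg Dh])
  then have "((\<lambda>y. y) has_real_derivative dI a b g (h x) * dI a b h x) (at x within {a..b})"
    by (rule has_field_derivative_transform_within[OF _ zero_less_one assms(3)])
       (use B(11) in \<open>auto simp: g_def\<close>)
  moreover have nb: "at x within {a..b} \<noteq> bot" using assms by (simp add: trivial_limit_within)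
  ultimately have prod: "dI a b g (h x) * dI a b h x = 1"
    using has_field_derivative_unique DERIV_ident by blast
  have "0 \<le> dI a b h x" using deriv_nonneg[OF assms(1,3) B(2) Dh] .
  with prod show pos: "0 < dI a b h x"
    by (metis less_eq_real_def mult_zero_right zero_neq_one)
  show "dI a b (inv_into {a..b} h) (h x) = 1 / dI a b h x"
    using prod pos by (simp add: g_def field_simps)
qed

lemma conj_deriv:
  assumes "a < b" "h \<in> Diff1p a b" "g \<in> Diff1p a b" "x \<in> {a..b}"
  shows "conjI a b h g (h x) = h (g x)"
    "dI a b (conjI a b h g) (h x) = dI a b h (g x) * dI a b g x / dI a b h x"
proof -
  note B = Diff1p_basic[OF assms(2)]
  note C = Diff1p_basic[OF assms(3)]
  define hi where "hi = inv_into {a..b} h"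
  have hx: "h x \<in> {a..b}" using B assms by auto
  show "conjI a b h g (h x) = h (g x)"
    unfolding conjI_def using B(11)[OF assms(4)] by simp
  have D1: "(hi has_real_derivative 1 / dI a b h x) (at (h x) within {a..b})"
    using dI_deriv[OF B(6)[OF hx]] Diff1p_pos[OF assms(1,2,4)] by (simp add: hi_def)
  have im1: "hi ` {a..b} = {a..b}" using B(5) by (simp add: bij_betw_def hi_def)
  have D2: "(g has_real_derivative dI a b g x) (at (hi (h x)) within hi ` {a..b})"
    unfolding im1 using dI_deriv[OF C(3)[OF assms(4)]] B(11)[OF assms(4)] by (simp add: hi_def)
  have D3: "(g \<circ> hi has_real_derivative dI a b g x * (1 / dI a b h x)) (at (h x) within {a..b})"
    by (rule DERIV_image_chain[OF D2 D1])
  have im2: "(g \<circ> hi) ` {a..b} = {a..b}" by (metis im1 C(8) image_comp)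
  have gx: "g x \<in> {a..b}" using C assms by auto
  have D4: "(h has_real_derivative dI a b h (g x)) (at ((g \<circ> hi) (h x)) within (g \<circ> hi) ` {a..b})"
    unfolding im2 using dI_deriv[OF B(3)[OF gx]] B(11)[OF assms(4)] by (simp add: hi_def)
  have "(h \<circ> (g \<circ> hi) has_real_derivative dI a b h (g x) * (dI a b g x * (1 / dI a b h x))) (at (h x) within {a..b})"
    by (rule DERIV_image_chain[OF D4 D3])
  then have "(conjI a b h g has_real_derivative dI a b h (g x) * dI a b g x / dI a b h x) (at (h x) within {a..b})"
    by (simp add: conjI_def hi_def o_assoc)
  then show "dI a b (conjI a b h g) (h x) = dI a b h (g x) * dI a b g x / dI a b h x"
    by (rule dI_eq[OF assms(1) hx])
qed

lemma cont_bound: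
  assumes "continuous_on {a..b} (f::real\<Rightarrow>real)"
  shows "\<exists>M. \<forall>x\<in>{a..b}. \<bar>f x\<bar> \<le> M"
proof -
  have "compact (f ` {a..b})" by (rule compact_continuous_image[OF assms compact_Icc])
  then have "bounded (f ` {a..b})" by (rule compact_imp_bounded)
  then show ?thesis by (auto simp: bounded_iff)
qed

lemma c1dist_le:
  assumes "a \<le> b" "\<forall>y\<in>{a..b}. \<bar>f y - g y\<bar> \<le> A" "\<forall>y\<in>{a..b}. \<bar>dI a b f y - dI a b g y\<bar> \<le> B"
  shows "0 \<le> c1dist a b f g" "c1dist a b f g \<le> A + B"
proof -
  have b1: "bdd_above ((\<lambda>y. \<bar>f y - g y\<bar>) ` {a..b})" using assms(2) by (intro bdd_aboveI2) auto
  have b2: "bdd_above ((\<lambda>y. \<bar>dI a b f y - dI a b g y\<bar>) ` {a..b})" using assms(3) by (intro bdd_aboveI2) auto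
  have ne: "{a..b} \<noteq> {}" using assms by auto
  have aa: "a \<in> {a..b}" using assms by auto
  have "0 \<le> (SUP y\<in>{a..b}. \<bar>f y - g y\<bar>)"
    by (rule order_trans[OF abs_ge_zero cSUP_upper[OF aa b1]])
  moreover have "0 \<le> (SUP y\<in>{a..b}. \<bar>dI a b f y - dI a b g y\<bar>)"
    by (rule order_trans[OF abs_ge_zero cSUP_upper[OF aa b2]])
  ultimately show "0 \<le> c1dist a b f g" by (simp add: c1dist_def)
  have "(SUP y\<in>{a..b}. \<bar>f y - g y\<bar>) \<le> A" using assms(2) by (intro cSUP_least[OF ne]) auto
  moreover have "(SUP y\<in>{a..b}. \<bar>dI a b f y - dI a b g y\<bar>) \<le> B" using assms(3) by (intro cSUP_least[OF ne]) auto
  ultimately show "c1dist a b f g \<le> A + B" by (simp add: c1dist_def)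
qed

lemma conj_bounds:
  assumes "a < b" "h \<in> Diff1p a b" "g \<in> Diff1p a b"
  obtains A B where "0 \<le> A" "0 \<le> B" "c1dist a b (conjI a b h g) id = A + B"
    "\<And>x. x \<in> {a..b} \<Longrightarrow> \<bar>h (g x) - h x\<bar> \<le> A"
    "\<And>x. x \<in> {a..b} \<Longrightarrow> \<bar>dI a b h (g x) * dI a b g x - dI a b h x\<bar> \<le> B * dI a b h x"
proof -
  note Bh = Diff1p_basic[OF assms(2)] and Bg = Diff1p_basic[OF assms(3)]
  define k where "k = conjI a b h g"
  define A where "A = (SUP y\<in>{a..b}. \<bar>k y - id y\<bar>)"
  define B where "B = (SUP y\<in>{a..b}. \<bar>dI a b k y - dI a b id y\<bar>)"
  have kval: "\<And>y. y\<in>{a..b} \<Longrightarrow> k y \<in> {a..b}" unfolding k_def conjI_def using Bh Bg by auto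
  have bA: "bdd_above ((\<lambda>y. \<bar>k y - id y\<bar>) ` {a..b})"
  proof (rule bdd_aboveI2[where M="b-a"])
    fix y assume y: "y \<in> {a..b}"
    then show "\<bar>k y - id y\<bar> \<le> b - a" using kval[OF y] by auto
  qed
  obtain M1 where M1: "\<forall>x\<in>{a..b}. \<bar>dI a b h x\<bar> \<le> M1" using cont_bound[OF Bh(4)] by blast
  obtain M2 where M2: "\<forall>x\<in>{a..b}. \<bar>dI a b g x\<bar> \<le> M2" using cont_bound[OF Bg(4)] by blast
  obtain M3 where M3: "\<forall>x\<in>{a..b}. \<bar>dI a b (inv_into {a..b} h) x\<bar> \<le> M3" using cont_bound[OF Bh(7)] by blast
  have aa: "a \<in> {a..b}" using assms by auto
  have M0: "0 \<le> M1" "0 \<le> M2" "0 \<le> M3" using M1 M2 M3 aa by (meson abs_ge_zero order_trans)+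
  have bB: "bdd_above ((\<lambda>y. \<bar>dI a b k y - dI a b id y\<bar>) ` {a..b})"
  proof (rule bdd_aboveI2[where M="M1*M2*M3 + 1"])
    fix y assume y: "y \<in> {a..b}"
    define x where "x = inv_into {a..b} h y"
    have x: "x \<in> {a..b}" "h x = y" using Bh y x_def by auto
    have gx: "g x \<in> {a..b}" using Bg x by auto
    have "dI a b k y = dI a b h (g x) * dI a b g x * (1/dI a b h x)"
      using conj_deriv(2)[OF assms x(1)] x(2) by (simp add: k_def)
    also have "1/dI a b h x = dI a b (inv_into {a..b} h) y" using Diff1p_pos(2)[OF assms(1,2) x(1)] x(2) by simp
    finally have e: "dI a b k y = dI a b h (g x) * dI a b g x * dI a b (inv_into {a..b} h) y" .
    have "\<bar>dI a b k y\<bar> \<le> M1*M2*M3"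
      unfolding e abs_mult
      by (intro mult_mono) (use M1 M2 M3 M0 gx x y in auto)
    then show "\<bar>dI a b k y - dI a b id y\<bar> \<le> M1*M2*M3 + 1" using dI_id[OF assms(1) y] by linarith
  qed
  show thesis
  proof (rule that[of A B])
    show "0 \<le> A" unfolding A_def by (rule order_trans[OF abs_ge_zero cSUP_upper[OF aa bA]])
    show "0 \<le> B" unfolding B_def by (rule order_trans[OF abs_ge_zero cSUP_upper[OF aa bB]])
    show "c1dist a b (conjI a b h g) id = A + B" by (simp add: c1dist_def A_def B_def k_def)
    fix x assume x: "x \<in> {a..b}"
    have hx: "h x \<in> {a..b}" using Bh x by auto
    have "\<bar>k (h x) - id (h x)\<bar> \<le> A" unfolding A_def by (rule cSUP_upper[OF hx bA])
    then show "\<bar>h (g x) - h x\<bar> \<le> A" using conj_deriv(1)[OF assms x] by (simp add: k_def)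
    have d: "0 < dI a b h x" using Diff1p_pos(1)[OF assms(1,2) x] .
    have "\<bar>dI a b k (h x) - dI a b id (h x)\<bar> \<le> B" unfolding B_def by (rule cSUP_upper[OF hx bB])
    then have "\<bar>dI a b h (g x) * dI a b g x / dI a b h x - 1\<bar> \<le> B"
      using conj_deriv(2)[OF assms x] dI_id[OF assms(1) hx] by (simp add: k_def)
    then have "\<bar>dI a b h (g x) * dI a b g x / dI a b h x - 1\<bar> * dI a b h x \<le> B * dI a b h x"
      using d by (simp add: mult_right_mono)
    moreover have "\<bar>dI a b h (g x) * dI a b g x / dI a b h x - 1\<bar> * dI a b h x
        = \<bar>dI a b h (g x) * dI a b g x - dI a b h x\<bar>"
      using d by (simp add: abs_mult[symmetric] field_simps)
    ultimately show "\<bar>dI a b h (g x) * dI a b g x - dI a b h x\<bar> \<le> B * dI a b h x" by simp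
  qed
qed

lemma inv_deriv:
  assumes "a < b" "continuous_on {a..b} f" "inj_on f {a..b}" "f ` {a..b} = {a..b}" "y \<in> {a..b}"
    "(f has_real_derivative D) (at (inv_into {a..b} f y) within {a..b})" "D \<noteq> 0"
  shows "(inv_into {a..b} f has_real_derivative inverse D) (at y within {a..b})"
proof -
  define g where "g = inv_into {a..b} f"
  define x where "x = g y"
  have x: "x \<in> {a..b}" "f x = y" using assms(4,5) unfolding x_def g_def
    by (metis inv_into_into, metis f_inv_into_f)
  have gf: "\<forall>z\<in>{a..b}. g (f z) = z" using assms(3) by (simp add: g_def inv_into_f_f)
  have fg: "\<And>z. z \<in> {a..b} \<Longrightarrow> f (g z) = z" using assms(4) unfolding g_def by (metis f_inv_into_f)
  have gin: "\<And>z. z \<in> {a..b} \<Longrightarrow> g z \<in> {a..b}" using assms(4) unfolding g_def by (metis inv_into_into)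
  have gc: "continuous_on {a..b} g"
    using continuous_on_inv[OF assms(2) compact_Icc gf] assms(4) by simp
  have gt: "(g \<longlongrightarrow> g y) (at y within {a..b})"
    using gc assms(5) by (simp add: continuous_on_eq_continuous_within continuous_within)
  have ev: "eventually (\<lambda>z. z \<in> {a..b} \<and> z \<noteq> y) (at y within {a..b})"
    by (simp add: eventually_at_filter)
  have "eventually (\<lambda>z. g z \<in> {a..b} \<and> g z \<noteq> x) (at y within {a..b})"
    using ev by (rule eventually_mono) (metis fg gin x(2))
  with gt have fl: "filterlim g (at x within {a..b}) (at y within {a..b})"
    by (simp add: filterlim_at x_def)
  have Q: "((\<lambda>w. (f w - f x) / (w - x)) \<longlongrightarrow> D) (at x within {a..b})"
    using assms(6) by (simp add: has_field_derivative_iff x_def g_def)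
  have "((\<lambda>z. (f (g z) - f x) / (g z - x)) \<longlongrightarrow> D) (at y within {a..b})"
    using filterlim_compose[OF Q fl] by (simp add: o_def)
  then have "((\<lambda>z. inverse ((f (g z) - f x) / (g z - x))) \<longlongrightarrow> inverse D) (at y within {a..b})"
    using assms(7) by (rule tendsto_inverse)
  then have "((\<lambda>z. (g z - g y) / (z - y)) \<longlongrightarrow> inverse D) (at y within {a..b})"
  proof (rule Lim_transform_eventually)
    show "eventually (\<lambda>z. inverse ((f (g z) - f x) / (g z - x)) = (g z - g y) / (z - y)) (at y within {a..b})"
      using ev
    proof (rule eventually_mono)
      fix z assume "z \<in> {a..b} \<and> z \<noteq> y"
      then have "f (g z) = z" using fg by blast
      then have "inverse ((f (g z) - f x) / (g z - x)) = (g z - x) / (z - y)"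
        using x(2) by (simp add: inverse_divide)
      then show "inverse ((f (g z) - f x) / (g z - x)) = (g z - g y) / (z - y)"
        by (simp add: x_def)
    qed
  qed
  then show ?thesis unfolding g_def[symmetric] by (simp add: has_field_derivative_iff)
qed

lemma Diff1p_ends:
  assumes "a < b" "h \<in> Diff1p a b"
  shows "h a = a" "h b = b"
proof -
  note B = Diff1p_basic[OF assms(2)]
  have aa: "a \<in> {a..b}" and bb: "b \<in> {a..b}" using assms by auto
  obtain x where x: "x \<in> {a..b}" "h x = a" using B(8) aa by (metis imageE)
  show "h a = a"
  proof (rule ccontr)
    assume "h a \<noteq> a"
    then have "x \<noteq> a" using x by auto
    then have "a < x" using x by auto
    then have "h a < h x" using B(2) aa x by (auto simp: strict_mono_on_def)
    then show False using x B(10)[OF aa] by auto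
  qed
  obtain y where y: "y \<in> {a..b}" "h y = b" using B(8) bb by (metis imageE)
  show "h b = b"
  proof (rule ccontr)
    assume "h b \<noteq> b"
    then have "y \<noteq> b" using y by auto
    then have "y < b" using y by auto
    then have "h y < h b" using B(2) bb y by (auto simp: strict_mono_on_def)
    then show False using y B(10)[OF bb] by auto
  qed
qed

lemma comb_Diff1p:
  assumes "a < b" "P \<in> Diff1p a b" "Q \<in> Diff1p a b" "0 \<le> s" "s \<le> 1"
  shows "(\<lambda>x. (1-s)*P x + s*Q x) \<in> Diff1p a b"
    "\<And>x. x\<in>{a..b} \<Longrightarrow> dI a b (\<lambda>x. (1-s)*P x + s*Q x) x = (1-s)*dI a b P x + s*dI a b Q x"
proof -
  note BP = Diff1p_basic[OF assms(2)] and BQ = Diff1p_basic[OF assms(3)]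
  define C where "C = (\<lambda>x. (1-s)*P x + s*Q x)"
  define F where "F = (\<lambda>x. (1-s)*dI a b P x + s*dI a b Q x)"
  have DC: "(C has_real_derivative F x) (at x within {a..b})" if x: "x\<in>{a..b}" for x
    unfolding C_def F_def by (intro DERIV_add DERIV_cmult dI_deriv BP(3)[OF x] BQ(3)[OF x])
  have dC: "dI a b C x = F x" if x: "x\<in>{a..b}" for x using dI_eq[OF assms(1) x DC[OF x]] .
  then show "\<And>x. x\<in>{a..b} \<Longrightarrow> dI a b (\<lambda>x. (1-s)*P x + s*Q x) x = (1-s)*dI a b P x + s*dI a b Q x"
    by (simp add: C_def F_def)
  have pos: "0 < F x" if x: "x\<in>{a..b}" for x
  proof -
    have p: "0 < dI a b P x" "0 < dI a b Q x"
      using Diff1p_pos(1)[OF assms(1,2) x] Diff1p_pos(1)[OF assms(1,3) x] by auto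
    show ?thesis
    proof (cases "s < 1")
      case True
      then have "0 < (1-s)*dI a b P x" using p by simp
      moreover have "0 \<le> s*dI a b Q x" using p assms(4) by simp
      ultimately show ?thesis by (simp add: F_def)
    next
      case False
      then have "s = 1" using assms(5) by simp
      then show ?thesis using p by (simp add: F_def)
    qed
  qed
  have cont: "continuous_on {a..b} C" unfolding C_def by (intro continuous_intros BP(14) BQ(14))
  have mono: "strict_mono_on {a..b} C"
  proof (rule strict_mono_onI)
    fix x y assume x: "x \<in> {a..b}" and y: "y \<in> {a..b}" and xy: "x < y"
    have p: "P x < P y" "Q x < Q y" using BP(2) BQ(2) x y xy by (auto simp: strict_mono_on_def)
    have "0 < (1-s)*(P y - P x) + s*(Q y - Q x)"
    proof (cases "s < 1")
      case True
      then have "0 < (1-s)*(P y - P x)" using p by simp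
      moreover have "0 \<le> s*(Q y - Q x)" using p assms(4) by simp
      ultimately show ?thesis by simp
    next
      case False
      then have "s = 1" using assms(5) by simp
      then show ?thesis using p by simp
    qed
    then show "C x < C y" by (simp add: C_def algebra_simps)
  qed
  have ends: "C a = a" "C b = b"
    using Diff1p_ends[OF assms(1,2)] Diff1p_ends[OF assms(1,3)] by (simp_all add: C_def algebra_simps)
  have aa: "a \<in> {a..b}" and bb: "b \<in> {a..b}" using assms by auto
  have im: "C ` {a..b} = {a..b}"
  proof
    show "C ` {a..b} \<subseteq> {a..b}"
    proof
      fix z assume "z \<in> C ` {a..b}"
      then obtain x where x: "x \<in> {a..b}" "z = C x" by blast
      have "C a \<le> C x" "C x \<le> C b" using strict_mono_on_leD[OF mono] x aa bb by auto
      then show "z \<in> {a..b}" using ends x by auto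
    qed
    show "{a..b} \<subseteq> C ` {a..b}"
    proof
      fix y assume y: "y \<in> {a..b}"
      then obtain x where "a \<le> x" "x \<le> b" "C x = y" using IVT'[of C a y b] ends cont assms(1) by auto
      then show "y \<in> C ` {a..b}" by auto
    qed
  qed
  have inj: "inj_on C {a..b}" by (rule strict_mono_on_imp_inj_on[OF mono])
  have bij: "bij_betw C {a..b} {a..b}" using inj im by (simp add: bij_betw_def)
  define Ci where "Ci = inv_into {a..b} C"
  have Ciin: "\<And>y. y \<in> {a..b} \<Longrightarrow> Ci y \<in> {a..b}" unfolding Ci_def using im by (metis inv_into_into)
  have DCi: "(Ci has_real_derivative inverse (F (Ci y))) (at y within {a..b})" if y: "y \<in> {a..b}" for y
    unfolding Ci_def
    by (rule inv_deriv[OF assms(1) cont inj im y]) (use DC Ciin[OF y] pos[OF Ciin[OF y]] Ci_def in auto)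
  have gf: "\<forall>z\<in>{a..b}. Ci (C z) = z" using inj by (simp add: Ci_def inv_into_f_f)
  have Cic: "continuous_on {a..b} Ci"
    using continuous_on_inv[OF cont compact_Icc gf] im by simp
  have Fc: "continuous_on {a..b} F" unfolding F_def by (intro continuous_intros BP(4) BQ(4))
  have "C \<in> Diff1p a b"
    unfolding Diff1p_def
  proof (intro CollectI conjI ballI)
    show "bij_betw C {a..b} {a..b}" by (rule bij)
    show "strict_mono_on {a..b} C" by (rule mono)
    show "C differentiable at x within {a..b}" if "x \<in> {a..b}" for x
      using DC[OF that] real_differentiable_def by blast
    show "continuous_on {a..b} (dI a b C)" using Fc dC by (metis continuous_on_eq)
    show "bij_betw (inv_into {a..b} C) {a..b} {a..b}" by (rule bij_betw_inv_into[OF bij])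
    show "inv_into {a..b} C differentiable at x within {a..b}" if "x \<in> {a..b}" for x
      using DCi[OF that] real_differentiable_def unfolding Ci_def by blast
    have c2: "continuous_on {a..b} (\<lambda>y. inverse (F (Ci y)))"
    proof (intro continuous_on_inverse continuous_on_compose2[OF Fc Cic])
      show "Ci ` {a..b} \<subseteq> {a..b}" using Ciin by blast
      show "\<forall>x\<in>{a..b}. F (Ci x) \<noteq> 0" using Ciin pos by (metis less_irrefl)
    qed
    show "continuous_on {a..b} (dI a b (inv_into {a..b} C))"
      by (rule continuous_on_eq[OF c2]) (metis dI_eq[OF assms(1) _ DCi] Ci_def)
  qed
  then show "(\<lambda>x. (1-s)*P x + s*Q x) \<in> Diff1p a b" by (simp add: C_def)
qed

lemma conj_comb:
  assumes "a < b" "P \<in> Diff1p a b" "Q \<in> Diff1p a b" "g \<in> Diff1p a b" "0 \<le> s" "s \<le> 1"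
  shows "0 \<le> c1dist a b (conjI a b (\<lambda>x. (1-s)*P x + s*Q x) g) id"
    "c1dist a b (conjI a b (\<lambda>x. (1-s)*P x + s*Q x) g) id
       \<le> c1dist a b (conjI a b P g) id + c1dist a b (conjI a b Q g) id"
proof -
  define C where "C = (\<lambda>x. (1-s)*P x + s*Q x)"
  have CD: "C \<in> Diff1p a b" unfolding C_def by (rule comb_Diff1p(1)[OF assms(1,2,3,5,6)])
  have dC: "\<And>x. x \<in> {a..b} \<Longrightarrow> dI a b C x = (1-s)*dI a b P x + s*dI a b Q x"
    unfolding C_def by (rule comb_Diff1p(2)[OF assms(1,2,3,5,6)])
  note BC = Diff1p_basic[OF CD] and Bg = Diff1p_basic[OF assms(4)]
  obtain AP BP where P: "0 \<le> AP" "0 \<le> BP" "c1dist a b (conjI a b P g) id = AP + BP"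
    "\<And>x. x \<in> {a..b} \<Longrightarrow> \<bar>P (g x) - P x\<bar> \<le> AP"
    "\<And>x. x \<in> {a..b} \<Longrightarrow> \<bar>dI a b P (g x) * dI a b g x - dI a b P x\<bar> \<le> BP * dI a b P x"
    using conj_bounds[OF assms(1,2,4)] by blast
  obtain AQ BQ where Q: "0 \<le> AQ" "0 \<le> BQ" "c1dist a b (conjI a b Q g) id = AQ + BQ"
    "\<And>x. x \<in> {a..b} \<Longrightarrow> \<bar>Q (g x) - Q x\<bar> \<le> AQ"
    "\<And>x. x \<in> {a..b} \<Longrightarrow> \<bar>dI a b Q (g x) * dI a b g x - dI a b Q x\<bar> \<le> BQ * dI a b Q x"
    using conj_bounds[OF assms(1,3,4)] by blast
  have s1: "0 \<le> 1 - s" using assms by simp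
  have main: "\<bar>conjI a b C g y - id y\<bar> \<le> AP + AQ \<and> \<bar>dI a b (conjI a b C g) y - dI a b id y\<bar> \<le> BP + BQ"
    if y: "y \<in> {a..b}" for y
  proof -
    define x where "x = inv_into {a..b} C y"
    have x: "x \<in> {a..b}" "C x = y" using BC y x_def by auto
    have gx: "g x \<in> {a..b}" using Bg x by auto
    have pP: "0 < dI a b P x" using Diff1p_pos(1)[OF assms(1,2) x(1)] .
    have pQ: "0 < dI a b Q x" using Diff1p_pos(1)[OF assms(1,3) x(1)] .
    have pC: "0 < dI a b C x" using Diff1p_pos(1)[OF assms(1) CD x(1)] .
    have v: "conjI a b C g y - id y = (1-s)*(P (g x) - P x) + s*(Q (g x) - Q x)"
      using conj_deriv(1)[OF assms(1) CD assms(4) x(1)] x(2) by (simp add: C_def algebra_simps)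
    have "\<bar>(1-s)*(P (g x) - P x) + s*(Q (g x) - Q x)\<bar> \<le> (1-s)*\<bar>P (g x) - P x\<bar> + s*\<bar>Q (g x) - Q x\<bar>"
      using s1 assms(5) by (metis abs_mult abs_of_nonneg abs_triangle_ineq)
    also have "\<dots> \<le> (1-s)*AP + s*AQ"
      by (intro add_mono mult_left_mono) (use s1 assms(5) P(4)[OF x(1)] Q(4)[OF x(1)] in auto)
    also have "\<dots> \<le> AP + AQ" using assms(5,6) P(1) Q(1)
      by (smt (verit) mult_left_le_one_le)
    finally have A: "\<bar>conjI a b C g y - id y\<bar> \<le> AP + AQ" using v by simp
    define uP where "uP = dI a b P (g x) * dI a b g x - dI a b P x"
    define uQ where "uQ = dI a b Q (g x) * dI a b g x - dI a b Q x"
    have num: "dI a b C (g x) * dI a b g x - dI a b C x = (1-s)*uP + s*uQ"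
      unfolding dC[OF gx] dC[OF x(1)] uP_def uQ_def by (simp add: algebra_simps)
    have "\<bar>(1-s)*uP + s*uQ\<bar> \<le> (1-s)*\<bar>uP\<bar> + s*\<bar>uQ\<bar>"
      using s1 assms(5) by (metis abs_mult abs_of_nonneg abs_triangle_ineq)
    also have "\<dots> \<le> (1-s)*(BP * dI a b P x) + s*(BQ * dI a b Q x)"
      by (intro add_mono mult_left_mono) (use s1 assms(5) P(5)[OF x(1)] Q(5)[OF x(1)] uP_def uQ_def in auto)
    also have "\<dots> \<le> (BP + BQ) * dI a b C x"
    proof -
      have e: "(BP + BQ) * dI a b C x = (1-s)*(BP * dI a b P x) + s*(BQ * dI a b Q x)
            + ((1-s)*(BQ * dI a b P x) + s*(BP * dI a b Q x))"
        unfolding dC[OF x(1)] by (simp add: algebra_simps)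
      have "0 \<le> (1-s)*(BQ * dI a b P x) + s*(BP * dI a b Q x)"
        using s1 assms(5) P(2) Q(2) pP pQ by simp
      then show ?thesis using e by linarith
    qed
    finally have N: "\<bar>dI a b C (g x) * dI a b g x - dI a b C x\<bar> \<le> (BP + BQ) * dI a b C x"
      using num by simp
    have "dI a b (conjI a b C g) y - dI a b id y = (dI a b C (g x) * dI a b g x - dI a b C x) / dI a b C x"
      using conj_deriv(2)[OF assms(1) CD assms(4) x(1)] x(2) dI_id[OF assms(1) y] pC
      by (simp add: field_simps)
    then have "\<bar>dI a b (conjI a b C g) y - dI a b id y\<bar> = \<bar>dI a b C (g x) * dI a b g x - dI a b C x\<bar> / dI a b C x"
      using pC by simp
    also have "\<dots> \<le> BP + BQ" using N pC by (simp add: divide_le_eq)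
    finally show ?thesis using A by simp
  qed
  have ab: "a \<le> b" using assms by simp
  show "0 \<le> c1dist a b (conjI a b (\<lambda>x. (1-s)*P x + s*Q x) g) id"
    using c1dist_le(1)[OF ab, of "conjI a b C g" id "AP+AQ" "BP+BQ"] main by (simp add: C_def)
  show "c1dist a b (conjI a b (\<lambda>x. (1-s)*P x + s*Q x) g) id
       \<le> c1dist a b (conjI a b P g) id + c1dist a b (conjI a b Q g) id"
    using c1dist_le(2)[OF ab, of "conjI a b C g" id "AP+AQ" "BP+BQ"] main P(3) Q(3) by (simp add: C_def)
qed

definition Lc :: "(nat \<Rightarrow> real \<Rightarrow> real) \<Rightarrow> nat \<Rightarrow> real \<Rightarrow> real \<Rightarrow> real" where
  "Lc H i s = (\<lambda>x. (1-s)*H i x + s*H (Suc i) x)"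

definition Kc :: "(nat \<Rightarrow> real \<Rightarrow> real) \<Rightarrow> real \<Rightarrow> real \<Rightarrow> real" where
  "Kc H v = Lc H (nat \<lfloor>v\<rfloor>) (v - of_int \<lfloor>v\<rfloor>)"

lemma K_piece:
  assumes "real i \<le> v" "v \<le> real i + 1"
  shows "Kc H v = Lc H i (v - real i)"
proof (cases "v < real i + 1")
  case True
  then have "\<lfloor>v\<rfloor> = int i" using assms(1) by (simp add: floor_eq_iff)
  then show ?thesis by (simp add: Kc_def)
next
  case False
  then have v: "v = real i + 1" using assms(2) by simp
  then have "\<lfloor>v\<rfloor> = int i + 1" by simp
  then have "nat \<lfloor>v\<rfloor> = Suc i" by simp
  then show ?thesis using v by (simp add: Kc_def Lc_def \<open>\<lfloor>v\<rfloor> = int i + 1\<close>)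
qed

lemma K_frac:
  assumes "0 \<le> v"
  shows "Kc H v = Lc H (nat \<lfloor>v\<rfloor>) (v - real (nat \<lfloor>v\<rfloor>))"
    "0 \<le> v - real (nat \<lfloor>v\<rfloor>)" "v - real (nat \<lfloor>v\<rfloor>) \<le> 1"
proof -
  have "0 \<le> \<lfloor>v\<rfloor>" using assms by simp
  then have e: "real (nat \<lfloor>v\<rfloor>) = of_int \<lfloor>v\<rfloor>" by simp
  show "Kc H v = Lc H (nat \<lfloor>v\<rfloor>) (v - real (nat \<lfloor>v\<rfloor>))" using e by (simp add: Kc_def)
  show "0 \<le> v - real (nat \<lfloor>v\<rfloor>)" using e by simp
  show "v - real (nat \<lfloor>v\<rfloor>) \<le> 1" using e by linarith
qed

lemma Lc_dist:
  assumes "a < b" "\<forall>n. H n \<in> Diff1p a b"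
  shows "\<exists>M. \<forall>s t. 0 \<le> s \<and> s \<le> 1 \<and> 0 \<le> t \<and> t \<le> 1 \<longrightarrow>
     0 \<le> c1dist a b (Lc H i s) (Lc H i t) \<and> c1dist a b (Lc H i s) (Lc H i t) \<le> M * \<bar>s - t\<bar>"
proof -
  note B0 = Diff1p_basic[OF assms(2)[rule_format, of i]] and B1 = Diff1p_basic[OF assms(2)[rule_format, of "Suc i"]]
  obtain D where D: "\<forall>x\<in>{a..b}. \<bar>H (Suc i) x - H i x\<bar> \<le> D"
    using cont_bound[of a b "\<lambda>x. H (Suc i) x - H i x"] B0(14) B1(14) by (auto intro: continuous_intros)
  obtain E where E: "\<forall>x\<in>{a..b}. \<bar>dI a b (H (Suc i)) x - dI a b (H i) x\<bar> \<le> E"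
    using cont_bound[of a b "\<lambda>x. dI a b (H (Suc i)) x - dI a b (H i) x"] B0(4) B1(4)
    by (auto intro: continuous_intros)
  show ?thesis
  proof (intro exI[of _ "D + E"] allI impI)
    fix s t :: real assume st: "0 \<le> s \<and> s \<le> 1 \<and> 0 \<le> t \<and> t \<le> 1"
    have A: "\<forall>x\<in>{a..b}. \<bar>Lc H i s x - Lc H i t x\<bar> \<le> \<bar>s - t\<bar> * D"
    proof
      fix x assume x: "x \<in> {a..b}"
      have "Lc H i s x - Lc H i t x = (s - t) * (H (Suc i) x - H i x)"
        by (simp add: Lc_def algebra_simps)
      then show "\<bar>Lc H i s x - Lc H i t x\<bar> \<le> \<bar>s - t\<bar> * D"
        using D x by (simp add: abs_mult mult_left_mono)
    qed
    have Bd: "\<forall>x\<in>{a..b}. \<bar>dI a b (Lc H i s) x - dI a b (Lc H i t) x\<bar> \<le> \<bar>s - t\<bar> * E"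
    proof
      fix x assume x: "x \<in> {a..b}"
      have "dI a b (Lc H i s) x - dI a b (Lc H i t) x = (s - t) * (dI a b (H (Suc i)) x - dI a b (H i) x)"
        using comb_Diff1p(2)[OF assms(1) assms(2)[rule_format, of i] assms(2)[rule_format, of "Suc i"], of s x]
          comb_Diff1p(2)[OF assms(1) assms(2)[rule_format, of i] assms(2)[rule_format, of "Suc i"], of t x] st x
        by (simp add: Lc_def algebra_simps)
      then show "\<bar>dI a b (Lc H i s) x - dI a b (Lc H i t) x\<bar> \<le> \<bar>s - t\<bar> * E"
        using E x by (simp add: abs_mult mult_left_mono)
    qed
    have ab: "a \<le> b" using assms by simp
    show "0 \<le> c1dist a b (Lc H i s) (Lc H i t) \<and> c1dist a b (Lc H i s) (Lc H i t) \<le> (D + E) * \<bar>s - t\<bar>"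
      using c1dist_le[OF ab A Bd] by (simp add: algebra_simps)
  qed
qed

lemma K_cont:
  assumes "a < b" "\<forall>n. H n \<in> Diff1p a b" "0 \<le> u"
  shows "\<exists>d>0. \<exists>M. \<forall>v. 0 \<le> v \<and> \<bar>v - u\<bar> < d \<longrightarrow>
     0 \<le> c1dist a b (Kc H v) (Kc H u) \<and> c1dist a b (Kc H v) (Kc H u) \<le> M * \<bar>v - u\<bar>"
proof -
  define m where "m = nat \<lfloor>u\<rfloor>"
  have fl: "0 \<le> \<lfloor>u\<rfloor>" using assms(3) by simp
  have mu: "real m \<le> u" "u < real m + 1" using fl unfolding m_def by linarith+
  obtain M1 where M1: "\<forall>s t. 0 \<le> s \<and> s \<le> 1 \<and> 0 \<le> t \<and> t \<le> 1 \<longrightarrow>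
     0 \<le> c1dist a b (Lc H m s) (Lc H m t) \<and> c1dist a b (Lc H m s) (Lc H m t) \<le> M1 * \<bar>s - t\<bar>"
    using Lc_dist[OF assms(1,2)] by blast
  obtain M2 where M2: "\<forall>s t. 0 \<le> s \<and> s \<le> 1 \<and> 0 \<le> t \<and> t \<le> 1 \<longrightarrow>
     0 \<le> c1dist a b (Lc H (m-1) s) (Lc H (m-1) t) \<and> c1dist a b (Lc H (m-1) s) (Lc H (m-1) t) \<le> M2 * \<bar>s - t\<bar>"
    using Lc_dist[OF assms(1,2)] by blast
  define d where "d = (if u = real m then 1 else min (u - real m) (real m + 1 - u))"
  have d: "0 < d" using mu by (auto simp: d_def)
  show ?thesis
  proof (rule exI[of _ d], rule conjI[OF d], rule exI[of _ "\<bar>M1\<bar> + \<bar>M2\<bar>"], intro allI impI)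
    fix v assume v: "0 \<le> v \<and> \<bar>v - u\<bar> < d"
    show "0 \<le> c1dist a b (Kc H v) (Kc H u) \<and> c1dist a b (Kc H v) (Kc H u) \<le> (\<bar>M1\<bar> + \<bar>M2\<bar>) * \<bar>v - u\<bar>"
    proof (cases "real m \<le> v")
      case True
      have vm: "v \<le> real m + 1"
      proof (cases "u = real m")
        case True then show ?thesis using v by (auto simp: d_def abs_less_iff)
      next
        case False then show ?thesis using v by (auto simp: d_def abs_less_iff)
      qed
      have e1: "Kc H v = Lc H m (v - real m)" using K_piece[OF True vm] .
      have e2: "Kc H u = Lc H m (u - real m)" using K_piece[OF mu(1)] mu(2) by simp
      have r: "0 \<le> c1dist a b (Kc H v) (Kc H u) \<and> c1dist a b (Kc H v) (Kc H u) \<le> M1 * \<bar>v - u\<bar>"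
        using M1[rule_format, of "v - real m" "u - real m"] True vm mu unfolding e1 e2 by simp
      have "M1 * \<bar>v - u\<bar> \<le> (\<bar>M1\<bar> + \<bar>M2\<bar>) * \<bar>v - u\<bar>" by (intro mult_right_mono) auto
      then show ?thesis using r by linarith
    next
      case False
      have um: "u = real m"
      proof (rule ccontr)
        assume "u \<noteq> real m"
        then have "\<bar>v - u\<bar> < u - real m" using v by (simp add: d_def)
        then show False using False by linarith
      qed
      have m1: "1 \<le> m" using False v by (cases m) auto
      have rm: "real (m - 1) = real m - 1" using m1 by (simp add: of_nat_diff)
      have vl: "real (m-1) \<le> v" using v um rm by (auto simp: d_def abs_less_iff)
      have vu: "v \<le> real (m-1) + 1" using False rm by simp
      have e1: "Kc H v = Lc H (m-1) (v - real (m-1))" using K_piece[OF vl vu] .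
      have e2: "Kc H u = Lc H (m-1) (u - real (m-1))" using K_piece[of "m-1" u H] um rm by simp
      have r: "0 \<le> c1dist a b (Kc H v) (Kc H u) \<and> c1dist a b (Kc H v) (Kc H u) \<le> M2 * \<bar>v - u\<bar>"
        using M2[rule_format, of "v - real (m-1)" "u - real (m-1)"] vl vu um rm unfolding e1 e2 by simp
      have "M2 * \<bar>v - u\<bar> \<le> (\<bar>M1\<bar> + \<bar>M2\<bar>) * \<bar>v - u\<bar>" by (intro mult_right_mono) auto
      then show ?thesis using r by linarith
    qed
  qed
qed

lemma K_in:
  assumes "a < b" "\<forall>n. H n \<in> Diff1p a b" "0 \<le> v"
  shows "Kc H v \<in> Diff1p a b"
  using comb_Diff1p(1)[OF assms(1) assms(2)[rule_format] assms(2)[rule_format] K_frac(2,3)[OF assms(3)]]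
    K_frac(1)[OF assms(3)] by (simp add: Lc_def)

lemma K_conj:
  assumes "a < b" "\<forall>n. H n \<in> Diff1p a b" "0 \<le> v" "g \<in> Diff1p a b"
  shows "0 \<le> c1dist a b (conjI a b (Kc H v) g) id"
    "c1dist a b (conjI a b (Kc H v) g) id \<le> c1dist a b (conjI a b (H (nat \<lfloor>v\<rfloor>)) g) id
        + c1dist a b (conjI a b (H (Suc (nat \<lfloor>v\<rfloor>))) g) id"
  using conj_comb[OF assms(1) assms(2)[rule_format] assms(2)[rule_format] assms(4) K_frac(2,3)[OF assms(3)]]
    K_frac(1)[OF assms(3)] by (simp_all add: Lc_def)

lemma tlim: "filterlim (\<lambda>t::real. t / (1 - t)) at_top (at_left 1)"
  unfolding filterlim_at_top
proof
  fix Z :: real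
  have "eventually (\<lambda>t. t \<in> {1 - 1/(\<bar>Z\<bar>+2)<..<1}) (at_left (1::real))"
    by (rule eventually_at_left_real) simp
  then show "eventually (\<lambda>t. Z \<le> t / (1 - t)) (at_left 1)"
  proof (rule eventually_mono)
    fix t assume t: "t \<in> {1 - 1/(\<bar>Z\<bar>+2)<..<1}"
    have p: "0 < 1 - t" using t by simp
    have "1 - t < 1/(\<bar>Z\<bar>+2)" using t by simp
    then have "(1 - t) * (\<bar>Z\<bar>+2) < 1" by (simp add: field_simps)
    then have q: "\<bar>Z\<bar>*(1-t) + 2*(1-t) < 1" by (simp add: algebra_simps)
    have z: "Z*(1-t) \<le> \<bar>Z\<bar>*(1-t)" by (rule mult_right_mono) (use p in auto)
    have tl: "t < 1" using t by simp
    have gen: "B \<le> t" if "A + 2*(1-t) < 1" "B \<le> A" for A B :: real using that tl by (simp add: algebra_simps)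
    have "Z * (1 - t) \<le> t" by (rule gen[OF q z])
    then show "Z \<le> t / (1 - t)" using p by (simp add: le_divide_eq)
  qed
qed

theorem theoremt:
  fixes a b :: real and G :: "(real \<Rightarrow> real) set"
  assumes "a < b" and "is_subgroup_Diff1p a b G"
  shows "(\<exists>h :: real \<Rightarrow> real \<Rightarrow> real.
            (\<forall>t\<in>{0..<1}. h t \<in> Diff1p a b)
          \<and> (\<forall>t\<in>{0..<1}. ((\<lambda>s. c1dist a b (h s) (h t)) \<longlongrightarrow> 0) (at t within {0..<1}))
          \<and> (\<forall>g\<in>G. ((\<lambda>t. c1dist a b (conjI a b (h t) g) id) \<longlongrightarrow> 0) (at_left 1)))
     \<longleftrightarrow>
         (\<exists>h :: nat \<Rightarrow> real \<Rightarrow> real.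
            (\<forall>n. h n \<in> Diff1p a b)
          \<and> (\<forall>g\<in>G. (\<lambda>n. c1dist a b (conjI a b (h n) g) id) \<longlonglongrightarrow> 0))"
proof
  assume "\<exists>h :: real \<Rightarrow> real \<Rightarrow> real.
            (\<forall>t\<in>{0..<1}. h t \<in> Diff1p a b)
          \<and> (\<forall>t\<in>{0..<1}. ((\<lambda>s. c1dist a b (h s) (h t)) \<longlongrightarrow> 0) (at t within {0..<1}))
          \<and> (\<forall>g\<in>G. ((\<lambda>t. c1dist a b (conjI a b (h t) g) id) \<longlongrightarrow> 0) (at_left 1))"
  then obtain h :: "real \<Rightarrow> real \<Rightarrow> real" where h1: "\<forall>t\<in>{0..<1}. h t \<in> Diff1p a b"
    and h3: "\<forall>g\<in>G. ((\<lambda>t. c1dist a b (conjI a b (h t) g) id) \<longlongrightarrow> 0) (at_left 1)" by blast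
  define f where "f = (\<lambda>n. 1 + - inverse (real (Suc n)))"
  have fin: "f n \<in> {0..<1}" for n
  proof -
    have "0 < inverse (real (Suc n))" "inverse (real (Suc n)) \<le> 1" by (auto simp: field_simps)
    then show ?thesis by (simp add: f_def)
  qed
  have flim: "filterlim f (at_left 1) sequentially"
    unfolding filterlim_at
  proof
    show "eventually (\<lambda>n. f n \<in> {..<1} \<and> f n \<noteq> 1) sequentially"
    proof (intro always_eventually allI)
      fix n show "f n \<in> {..<1} \<and> f n \<noteq> 1" using fin[of n] by auto
    qed
    show "(f \<longlongrightarrow> 1) sequentially" unfolding f_def by (rule LIMSEQ_inverse_real_of_nat_add_minus)
  qed
  show "\<exists>h :: nat \<Rightarrow> real \<Rightarrow> real.
            (\<forall>n. h n \<in> Diff1p a b)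
          \<and> (\<forall>g\<in>G. (\<lambda>n. c1dist a b (conjI a b (h n) g) id) \<longlonglongrightarrow> 0)"
  proof (intro exI[of _ "\<lambda>n. h (f n)"] conjI allI ballI)
    show "h (f n) \<in> Diff1p a b" for n using h1 fin by blast
    fix g assume "g \<in> G"
    then have "((\<lambda>t. c1dist a b (conjI a b (h t) g) id) \<longlongrightarrow> 0) (at_left 1)" using h3 by blast
    from filterlim_compose[OF this flim]
    show "(\<lambda>n. c1dist a b (conjI a b (h (f n)) g) id) \<longlonglongrightarrow> 0" by (simp add: o_def)
  qed
next
  assume "\<exists>h :: nat \<Rightarrow> real \<Rightarrow> real.
            (\<forall>n. h n \<in> Diff1p a b)
          \<and> (\<forall>g\<in>G. (\<lambda>n. c1dist a b (conjI a b (h n) g) id) \<longlonglongrightarrow> 0)"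
  then obtain H :: "nat \<Rightarrow> real \<Rightarrow> real" where H1: "\<forall>n. H n \<in> Diff1p a b"
    and H2: "\<forall>g\<in>G. (\<lambda>n. c1dist a b (conjI a b (H n) g) id) \<longlonglongrightarrow> 0" by blast
  have GD: "G \<subseteq> Diff1p a b" using assms(2) by (simp add: is_subgroup_Diff1p_def)
  define V where "V = (\<lambda>t::real. t / (1 - t))"
  have V0: "0 \<le> V t" if "t \<in> {0..<1}" for t using that by (simp add: V_def)
  show "\<exists>h :: real \<Rightarrow> real \<Rightarrow> real.
            (\<forall>t\<in>{0..<1}. h t \<in> Diff1p a b)
          \<and> (\<forall>t\<in>{0..<1}. ((\<lambda>s. c1dist a b (h s) (h t)) \<longlongrightarrow> 0) (at t within {0..<1}))
          \<and> (\<forall>g\<in>G. ((\<lambda>t. c1dist a b (conjI a b (h t) g) id) \<longlongrightarrow> 0) (at_left 1))"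
  proof (intro exI[of _ "\<lambda>t. Kc H (V t)"] conjI ballI)
    show "Kc H (V t) \<in> Diff1p a b" if "t \<in> {0..<1}" for t
      by (rule K_in[OF assms(1) H1 V0[OF that]])
  next
    fix t0 :: real assume t0: "t0 \<in> {0..<1}"
    define u where "u = V t0"
    have u0: "0 \<le> u" using V0[OF t0] by (simp add: u_def)
    obtain d M where d: "0 < d" and dM: "\<forall>v. 0 \<le> v \<and> \<bar>v - u\<bar> < d \<longrightarrow>
       0 \<le> c1dist a b (Kc H v) (Kc H u) \<and> c1dist a b (Kc H v) (Kc H u) \<le> M * \<bar>v - u\<bar>"
      using K_cont[OF assms(1) H1 u0] by blast
    have nz: "1 - t0 \<noteq> 0" using t0 by simp
    have vt: "(V \<longlongrightarrow> u) (at t0 within {0..<1})"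
      unfolding V_def u_def by (intro tendsto_intros nz)
    have ev1: "eventually (\<lambda>s. dist (V s) u < d) (at t0 within {0..<1})" by (rule tendstoD[OF vt d])
    have ev2: "eventually (\<lambda>s. s \<in> {0..<1}) (at t0 within {0..<1})" by (simp add: eventually_at_filter)
    have ev: "eventually (\<lambda>s. 0 \<le> c1dist a b (Kc H (V s)) (Kc H (V t0))
          \<and> c1dist a b (Kc H (V s)) (Kc H (V t0)) \<le> M * \<bar>V s - u\<bar>) (at t0 within {0..<1})"
      using ev1 ev2
    proof eventually_elim
      case (elim s)
      then show ?case using dM[rule_format, of "V s"] V0[of s] by (simp add: u_def dist_real_def)
    qed
    have up: "((\<lambda>s. M * \<bar>V s - u\<bar>) \<longlongrightarrow> 0) (at t0 within {0..<1})"
    proof -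
      have "((\<lambda>s. M * \<bar>V s - u\<bar>) \<longlongrightarrow> M * \<bar>u - u\<bar>) (at t0 within {0..<1})"
        by (intro tendsto_intros vt)
      then show ?thesis by simp
    qed
    show "((\<lambda>s. c1dist a b (Kc H (V s)) (Kc H (V t0))) \<longlongrightarrow> 0) (at t0 within {0..<1})"
      by (rule real_tendsto_sandwich[where f="\<lambda>_. 0" and h="\<lambda>s. M * \<bar>V s - u\<bar>"])
         (use ev up in \<open>auto elim: eventually_mono\<close>)
  next
    fix g assume g: "g \<in> G"
    have gD: "g \<in> Diff1p a b" using g GD by blast
    define e where "e = (\<lambda>n. c1dist a b (conjI a b (H n) g) id)"
    have e0: "e \<longlonglongrightarrow> 0" using H2 g by (simp add: e_def)
    have e2: "(\<lambda>n. e n + e (Suc n)) \<longlonglongrightarrow> 0" using tendsto_add[OF e0 LIMSEQ_Suc[OF e0]] by simp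
    have nl: "filterlim (\<lambda>t. nat \<lfloor>V t\<rfloor>) sequentially (at_left 1)"
      unfolding V_def
      by (rule filterlim_compose[OF filterlim_nat_sequentially filterlim_compose[OF filterlim_floor_sequentially tlim]])
    have up: "((\<lambda>t. e (nat \<lfloor>V t\<rfloor>) + e (Suc (nat \<lfloor>V t\<rfloor>))) \<longlongrightarrow> 0) (at_left 1)"
      using filterlim_compose[OF e2 nl] by (simp add: o_def)
    have ev: "eventually (\<lambda>t. 0 \<le> c1dist a b (conjI a b (Kc H (V t)) g) id
        \<and> c1dist a b (conjI a b (Kc H (V t)) g) id \<le> e (nat \<lfloor>V t\<rfloor>) + e (Suc (nat \<lfloor>V t\<rfloor>))) (at_left (1::real))"
      using eventually_at_left_real[OF zero_less_one]
    proof (rule eventually_mono)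
      fix t :: real assume "t \<in> {0<..<1}"
      then have "0 \<le> V t" using V0[of t] by simp
      then show "0 \<le> c1dist a b (conjI a b (Kc H (V t)) g) id
        \<and> c1dist a b (conjI a b (Kc H (V t)) g) id \<le> e (nat \<lfloor>V t\<rfloor>) + e (Suc (nat \<lfloor>V t\<rfloor>))"
        using K_conj[OF assms(1) H1 _ gD] by (simp add: e_def)
    qed
    show "((\<lambda>t. c1dist a b (conjI a b (Kc H (V t)) g) id) \<longlongrightarrow> 0) (at_left 1)"
      by (rule real_tendsto_sandwich[where f="\<lambda>_. 0" and h="\<lambda>t. e (nat \<lfloor>V t\<rfloor>) + e (Suc (nat \<lfloor>V t\<rfloor>))"])
         (use ev up in \<open>auto elim: eventually_mono\<close>)
  qed
qed

end
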